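(* Let $\gamma_*\in(0,1)$, $\zeta_*\in(0,\tfrac12)$, and $\varepsilon\in(0,\tfrac23\zeta_* )$. Set $\zeta=\zeta_*-\varepsilon$ and $\gamma=\gamma_*\frac{\zeta_*}{\zeta}$. Let $P_0$ be the Gaussian mixture $(1-\zeta_* )\mathcal{N}(0,1)+\zeta_*\mathcal{N}(\gamma_*,1)$ and $P_1$ the Gaussian mixture $(1-\zeta)\mathcal{N}(0,1)+\zeta\mathcal{N}(\gamma,1)$. Then there is an absolute constant $C>0$ such that \[ \mathrm{KL}(P_1,P_0)\le C\,\varepsilon^2\gamma_*^4. \]
   Context: $\mathrm{KL}(P_1,P_0)=\int \log\frac{dP_1}{dP_0}\,dP_1$ denotes the Kullback–Leibler divergence. *)

theory Defs
  imports "HOL-Probability.Probability"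
begin

definition mix_density :: "real \<Rightarrow> real \<Rightarrow> real \<Rightarrow> real" where
  "mix_density z g x = (1 - z) * normal_density 0 1 x + z * normal_density g 1 x"

definition gauss_mix :: "real \<Rightarrow> real \<Rightarrow> real measure" where
  "gauss_mix z g = density lborel (\<lambda>x. ennreal (mix_density z g x))"

end

theory Submission
  imports Defs
begin

lemma nd_prod:
  "normal_density a 1 x * normal_density b 1 x / normal_density 0 1 x
     = exp (a*b) * normal_density (a+b) 1 x"
proof -
  have "exp (-(x - a)\<^sup>2/2) * exp (-(x - b)\<^sup>2/2) / exp (-(x)\<^sup>2/2) = exp (a*b) * exp (-(x-(a+b))\<^sup>2/2)"
    unfolding exp_add[symmetric] exp_diff[symmetric] by (rule arg_cong[where f=exp]) (simp add: power2_eq_square field_simps)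
  then show ?thesis unfolding normal_density_def by (simp add: field_simps)
qed

lemma series_eq:
  fixes c1 c2 c3 a1 a2 :: real
  shows "(\<lambda>k. (c1 * a1^k + c2 * a2^k + c3 * 0^k)\<^sup>2 / fact k) sums
     (c1\<^sup>2 * exp (a1*a1) + c2\<^sup>2 * exp (a2*a2) + c3\<^sup>2 + 2*c1*c2*exp(a1*a2) + 2*c1*c3 + 2*c2*c3)"
proof -
  have e: "\<And>x::real. (\<lambda>n. x^n / fact n) sums exp x"
  proof -
    fix x :: real show "(\<lambda>n. x^n / fact n) sums exp x"
      using exp_converges[of x] by (simp add: real_scaleR_def divide_inverse mult.commute)
  qed
  have "(\<lambda>k. c1\<^sup>2 * ((a1*a1)^k / fact k) + c2\<^sup>2 * ((a2*a2)^k / fact k) + c3\<^sup>2 * (0^k/fact k)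
      + 2*c1*c2*((a1*a2)^k/fact k) + 2*c1*c3 * (0^k/fact k) + 2*c2*c3*(0^k/fact k)) sums
     (c1\<^sup>2 * exp (a1*a1) + c2\<^sup>2 * exp (a2*a2) + c3\<^sup>2 * exp 0 + 2*c1*c2*exp(a1*a2) + 2*c1*c3 * exp 0 + 2*c2*c3 * exp 0)"
    by (intro sums_add sums_mult e)
  moreover have "\<And>k. (c1 * a1^k + c2 * a2^k + c3 * 0^k)\<^sup>2 / fact k = c1\<^sup>2 * ((a1*a1)^k / fact k) + c2\<^sup>2 * ((a2*a2)^k / fact k) + c3\<^sup>2 * (0^k/fact k)
      + 2*c1*c2*((a1*a2)^k/fact k) + 2*c1*c3 * (0^k/fact k) + 2*c2*c3*(0^k/fact k)"
    subgoal for k by (cases k) (simp_all add: power2_eq_square algebra_simps power_mult_distrib add_divide_distrib)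
    done
  ultimately show ?thesis by simp
qed

lemma pow_diff_bound:
  fixes g h :: real
  assumes "0 \<le> h" "h \<le> g" "h \<le> 1" "g \<le> 3"
  shows "0 \<le> g^n - h^n \<and> g^n - h^n \<le> 6^n * (g - h)"
proof (induction n)
  case 0 then show ?case using assms by simp
next
  case (Suc n)
  have hn: "h^n \<le> 1" using assms by (simp add: power_le_one)
  have "g^Suc n - h^Suc n = g*(g^n - h^n) + h^n*(g-h)" by (simp add: algebra_simps)
  moreover have "g*(g^n - h^n) \<le> 3 * (6^n*(g-h))"
    using Suc assms by (intro mult_mono) (auto simp: mult_nonneg_nonneg)
  moreover have "h^n*(g-h) \<le> 1 * (6^n*(g-h))"
  proof (rule mult_mono)
    show "h^n \<le> 1" by (rule hn)
    show "g - h \<le> 6^n*(g-h)" using assms by (simp add: mult_le_cancel_right1 one_le_power)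
  qed (use assms in auto)
  moreover have "0 \<le> g*(g^n - h^n) + h^n*(g-h)" using Suc assms by simp
  ultimately show ?case by simp
qed


lemma nd_int: "has_bochner_integral lborel (normal_density m 1) 1"
  by (simp add: has_bochner_integral_iff)

lemma I_integral:
  fixes c1 c2 c3 a1 a2 :: real
  shows "has_bochner_integral lborel
     (\<lambda>x. (c1*normal_density a1 1 x + c2*normal_density a2 1 x + c3*normal_density 0 1 x)\<^sup>2 / normal_density 0 1 x)
     (c1\<^sup>2 * exp (a1*a1) + c2\<^sup>2 * exp (a2*a2) + c3\<^sup>2 + 2*c1*c2*exp(a1*a2) + 2*c1*c3 + 2*c2*c3)"
proof -
  let ?p = "\<lambda>a x. normal_density a 1 x"
  have eq: "(c1*?p a1 x + c2*?p a2 x + c3*?p 0 x)\<^sup>2 / ?p 0 x =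
     c1\<^sup>2 * (?p a1 x * ?p a1 x / ?p 0 x) + c2\<^sup>2 * (?p a2 x * ?p a2 x / ?p 0 x) + c3\<^sup>2 * (?p 0 x * ?p 0 x / ?p 0 x)
     + 2*c1*c2 * (?p a1 x * ?p a2 x / ?p 0 x) + 2*c1*c3 * (?p a1 x * ?p 0 x / ?p 0 x) + 2*c2*c3 * (?p a2 x * ?p 0 x / ?p 0 x)" for x
  proof -
    have "?p 0 x > 0" by (rule normal_density_pos) simp
    then show ?thesis by (simp add: field_simps power2_eq_square)
  qed
  have eq2: "(c1*?p a1 x + c2*?p a2 x + c3*?p 0 x)\<^sup>2 / ?p 0 x =
     c1\<^sup>2 * (exp (a1*a1) * ?p (a1+a1) x) + c2\<^sup>2 * (exp (a2*a2) * ?p (a2+a2) x) + c3\<^sup>2 * (?p 0 x)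
     + 2*c1*c2 * (exp (a1*a2) * ?p (a1+a2) x) + 2*c1*c3 * (?p a1 x) + 2*c2*c3 * (?p a2 x)" for x
    unfolding eq nd_prod by simp
  have "has_bochner_integral lborel (\<lambda>x. c1\<^sup>2 * (exp (a1*a1) * ?p (a1+a1) x) + c2\<^sup>2 * (exp (a2*a2) * ?p (a2+a2) x) + c3\<^sup>2 * (?p 0 x)
     + 2*c1*c2 * (exp (a1*a2) * ?p (a1+a2) x) + 2*c1*c3 * (?p a1 x) + 2*c2*c3 * (?p a2 x))
     (c1\<^sup>2 * (exp (a1*a1) * 1) + c2\<^sup>2 * (exp (a2*a2) * 1) + c3\<^sup>2 * 1 + 2*c1*c2*(exp(a1*a2)*1) + 2*c1*c3*1 + 2*c2*c3*1)"
    by (intro has_bochner_integral_add has_bochner_integral_mult_right nd_int)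
  then show ?thesis unfolding eq2 by simp
qed


lemma main_bound:
  fixes gs zs e :: real
  assumes h: "0 < gs" "gs < 1" "0 < zs" "zs < 1/2" "0 < e" "e < 2/3 * zs"
  defines "z \<equiv> zs - e" and "g \<equiv> gs * zs / (zs - e)"
  shows "KL_divergence (exp 1) (gauss_mix zs gs) (gauss_mix z g) \<le> 18 * exp 36 * e^2 * gs^4"
proof -
  let ?p = "\<lambda>a x. normal_density a 1 x"
  have z0: "0 < z" "z < 1" "zs < 3*z" using h unfolding z_def by auto
  have gdef: "g = gs * zs / z" unfolding g_def z_def ..
  have gz: "g * z = gs * zs" unfolding gdef using z0 by simp
  have zsz: "zs / z \<le> 3" using z0 by (simp add: divide_le_eq)
  have ggs: "gs \<le> g" unfolding gdef using z0 h by (simp add: field_simps z_def)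
  have g3: "g \<le> 3"
  proof -
    have "g = gs * (zs / z)" unfolding gdef by simp
    also have "\<dots> \<le> 1 * 3" using h zsz z0 by (intro mult_mono) auto
    finally show ?thesis by simp
  qed
  define f1 where "f1 = mix_density zs gs"
  define f2 where "f2 = mix_density z g"
  define d where "d = (\<lambda>x. z * ?p g x + (- zs) * ?p gs x + e * ?p 0 x)"
  have pos: "\<And>a x. ?p a x > 0" by (rule normal_density_pos) simp
  have f1pos: "f1 x > 0" for x unfolding f1_def mix_density_def using h pos[of 0 x] pos[of gs x]
    by (intro add_pos_pos mult_pos_pos) auto
  have f2pos: "f2 x > 0" for x unfolding f2_def mix_density_def using z0 pos[of 0 x] pos[of g x]
    by (intro add_pos_pos mult_pos_pos) auto
  have f1ge: "f1 x \<ge> ?p 0 x / 2" for x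
    unfolding f1_def mix_density_def using h pos[of 0 x] pos[of gs x]
  proof -
    have a: "(1 - zs) * ?p 0 x \<ge> (1/2) * ?p 0 x" using h pos[of 0 x] by (intro mult_right_mono) auto
    have b: "zs * ?p gs x \<ge> 0" using h pos[of gs x] by simp
    from a b show "(1 - zs) * ?p 0 x + zs * ?p gs x \<ge> ?p 0 x / 2" by linarith
  qed
  have dd: "f2 x - f1 x = d x" for x
    unfolding f1_def f2_def d_def mix_density_def z_def by (simp add: algebra_simps)
  have ne: "\<And>x. f1 x \<noteq> 0" using f1pos by (metis less_irrefl)
  have KL: "KL_divergence (exp 1) (gauss_mix zs gs) (gauss_mix z g) = (\<integral>x. f2 x * ln (f2 x / f1 x) \<partial>lborel)"
  proof -
    have "KL_divergence (exp 1) (density lborel f1) (density lborel f2) = (\<integral>x. f2 x * log (exp 1) (f2 x / f1 x) \<partial>lborel)"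
      by (rule lborel.KL_density_density)
        (auto simp: less_imp_le[OF f1pos] less_imp_le[OF f2pos] ne, auto simp: f1_def f2_def mix_density_def)
    then show ?thesis unfolding gauss_mix_def f1_def f2_def by (simp add: log_def)
  qed
  define Iv where "Iv = z\<^sup>2 * exp (g*g) + (-zs)\<^sup>2 * exp (gs*gs) + e\<^sup>2 + 2*z*(-zs)*exp(g*gs) + 2*z*e + 2*(-zs)*e"
  have HI: "has_bochner_integral lborel (\<lambda>x. (d x)\<^sup>2 / ?p 0 x) Iv"
    unfolding d_def Iv_def by (rule I_integral)
  have Hd: "has_bochner_integral lborel d 0"
  proof -
    have "has_bochner_integral lborel d (z * 1 + (-zs) * 1 + e * 1)"
      unfolding d_def by (intro has_bochner_integral_add has_bochner_integral_mult_right nd_int)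
    then show ?thesis unfolding z_def by simp
  qed
  have HR: "has_bochner_integral lborel (\<lambda>x. 2 * ((d x)\<^sup>2 / ?p 0 x) + d x) (2 * Iv + 0)"
    by (intro has_bochner_integral_add has_bochner_integral_mult_right HI Hd)
  have Ivnn: "0 \<le> Iv"
  proof -
    have "Iv = integral\<^sup>L lborel (\<lambda>x. (d x)\<^sup>2 / ?p 0 x)" using HI by (simp add: has_bochner_integral_iff)
    also have "\<dots> \<ge> 0" by (rule integral_nonneg_AE, rule AE_I2) (simp add: less_imp_le[OF pos])
    finally show ?thesis by simp
  qed
  have pt: "f2 x * ln (f2 x / f1 x) \<le> 2 * ((d x)\<^sup>2 / ?p 0 x) + d x" for x
  proof -
    have "f2 x * ln (f2 x / f1 x) \<le> f2 x * (f2 x / f1 x - 1)"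
      using f1pos[of x] f2pos[of x] by (intro mult_left_mono ln_le_minus_one) auto
    also have "\<dots> = (d x)\<^sup>2 / f1 x + d x"
    proof -
      have e2: "f2 x = d x + f1 x" using dd[of x] by simp
      show ?thesis unfolding e2 using f1pos[of x] by (simp add: field_simps power2_eq_square)
    qed
    also have "(d x)\<^sup>2 / f1 x \<le> (d x)\<^sup>2 / (?p 0 x / 2)"
      using f1pos[of x] f1ge[of x] pos[of 0 x] by (intro divide_left_mono) auto
    finally show ?thesis by (simp add: mult.commute)
  qed
  have KLle: "KL_divergence (exp 1) (gauss_mix zs gs) (gauss_mix z g) \<le> 2 * Iv"
  proof (cases "integrable lborel (\<lambda>x. f2 x * ln (f2 x / f1 x))")
    case True
    have "(\<integral>x. f2 x * ln (f2 x / f1 x) \<partial>lborel) \<le> (\<integral>x. 2 * ((d x)\<^sup>2 / ?p 0 x) + d x \<partial>lborel)"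
      using True HR pt by (intro integral_mono) (auto simp: has_bochner_integral_iff)
    then show ?thesis using KL HR by (simp add: has_bochner_integral_iff)
  next
    case False
    then show ?thesis using KL Ivnn by (simp add: not_integrable_integral_eq)
  qed
  define M where "M = zs * gs * (g - gs)"
  have M0: "0 \<le> M" unfolding M_def using h ggs by simp
  have M3: "M \<le> 3 * e * gs^2"
  proof -
    have "g - gs = gs * e / z" unfolding gdef using z0 by (simp add: field_simps z_def)
    then have "M = gs^2 * e * (zs / z)" unfolding M_def by (simp add: power2_eq_square)
    also have "\<dots> \<le> gs^2 * e * 3" using zsz h by (intro mult_left_mono) auto
    finally show ?thesis by (simp add: mult_ac)
  qed
  have ser: "(\<lambda>k. (z * g^k + (-zs) * gs^k + e * 0^k)\<^sup>2 / fact k) sums Iv"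
    unfolding Iv_def by (rule series_eq)
  have ser2: "(\<lambda>k. M\<^sup>2 * (36^k / fact k)) sums (M\<^sup>2 * exp 36)"
  proof -
    have "(\<lambda>n. (36::real)^n / fact n) sums exp 36"
      using exp_converges[of "36::real"] by (simp add: real_scaleR_def divide_inverse mult.commute)
    then show ?thesis by (rule sums_mult)
  qed
  have tbound: "(z * g^k + (-zs) * gs^k + e * 0^k)\<^sup>2 / fact k \<le> M\<^sup>2 * (36^k / fact k)" for k
  proof (cases k)
    case 0
    then show ?thesis unfolding z_def by simp
  next
    case (Suc n)
    have s36: "(6::real)^n * 6^n = 36^n" by (simp add: power_mult_distrib[symmetric])
    have pd: "0 \<le> g^n - gs^n \<and> g^n - gs^n \<le> 6^n * (g - gs)"
      using pow_diff_bound[of gs g n] h ggs g3 by simp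
    have "z * g^k + (-zs) * gs^k + e * 0^k = (zs*gs) * (g^n - gs^n)"
    proof -
      have A: "z * g^k = zs*gs * g^n" using Suc gz by (simp add: mult_ac)
      have B: "zs * gs^k = (zs*gs) * gs^n" using Suc by simp
      have C: "e * 0^k = 0" using Suc by simp
      have "z * g^k + (-zs)*gs^k + e*0^k = zs*gs*g^n + (-(zs*gs*gs^n)) + 0"
        by (simp only: A B C mult_minus_left)
      then show ?thesis by (simp add: right_diff_distrib)
    qed
    then have "(z * g^k + (-zs) * gs^k + e * 0^k)\<^sup>2 = (zs*gs)\<^sup>2 * (g^n - gs^n)\<^sup>2"
      by (simp add: power_mult_distrib)
    also have "\<dots> \<le> (zs*gs)\<^sup>2 * (6^n * (g - gs))\<^sup>2"
      using pd by (intro mult_left_mono power_mono) auto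
    also have "\<dots> = M\<^sup>2 * 36^n" unfolding M_def s36[symmetric] by (simp add: power2_eq_square mult_ac)
    also have "\<dots> \<le> M\<^sup>2 * 36^k" using Suc by (intro mult_left_mono power_increasing) auto
    finally show ?thesis by (simp add: divide_right_mono)
  qed
  have "Iv \<le> M\<^sup>2 * exp 36" by (rule sums_le[OF tbound ser ser2])
  also have "\<dots> \<le> (3 * e * gs^2)\<^sup>2 * exp 36" using M0 M3 by (intro mult_right_mono power_mono) auto
  also have "(3 * e * gs^2)\<^sup>2 * exp 36 = 9 * exp 36 * e^2 * gs^4"
    by (simp add: power_mult_distrib power_mult[symmetric])
  finally have "Iv \<le> 9 * exp 36 * e^2 * gs^4" .
  then show ?thesis using KLle by simp
qed


theorem lemma10:
  shows "\<exists>C>0. \<forall>\<gamma>s \<zeta>s \<epsilon> :: real.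
    0 < \<gamma>s \<and> \<gamma>s < 1 \<and> 0 < \<zeta>s \<and> \<zeta>s < 1/2 \<and> 0 < \<epsilon> \<and> \<epsilon> < 2/3 * \<zeta>s \<longrightarrow>
    (let \<zeta> = \<zeta>s - \<epsilon>; \<gamma> = \<gamma>s * \<zeta>s / \<zeta> in
      KL_divergence (exp 1) (gauss_mix \<zeta>s \<gamma>s) (gauss_mix \<zeta> \<gamma>)
        \<le> C * \<epsilon>^2 * \<gamma>s^4)"
proof (intro exI[of _ "18 * exp 36"] conjI allI impI)
  show "(0::real) < 18 * exp 36" by simp
next
  fix gs zs e :: real
  assume "0 < gs \<and> gs < 1 \<and> 0 < zs \<and> zs < 1/2 \<and> 0 < e \<and> e < 2/3 * zs"
  then show "let z = zs - e; g = gs * zs / z in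
      KL_divergence (exp 1) (gauss_mix zs gs) (gauss_mix z g) \<le> 18 * exp 36 * e^2 * gs^4"
    using main_bound[of gs zs e] by (simp add: Let_def)
qed

end
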